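(* Suppose Assumptions (A1), (A2) and (LIN) hold, $f$ is Lipschitz continuous with constant $L_f$, and $x\in\mathcal{X}$ is such that $y^*(x)$ is a single point. Then $$|\widetilde\phi_t(x)-\phi(x)|\le L_f\,\frac{kt}{\tau(x)\,\|\nabla_y g(x,y^*(x))\|}\quad\text{for all }t>0,$$ where $\tau(x):=\inf_{y\in\mathcal{Y}(x),\,y\neq y^*(x)}\cos\angle\big(\nabla_y g(x,y^*(x)),\,y-y^*(x)\big)>0$.
   Context: Let $f,g,h_1,\dots,h_k:\mathbb{R}^n\times\mathbb{R}^m\to\mathbb{R}$ and $\mathcal{X}\subseteq\mathbb{R}^n$. For $x\in\mathcal{X}$ let $\mathcal{Y}(x)=\{y: h_i(x,y)\le 0,\ i=1,\dots,k\}$, $y^*(x)=\arg\min_{y\in\mathcal{Y}(x)} g(x,y)$, and $\phi(x)=\min_{y\in y^*(x)} f(x,y)$. For $t>0$ let $\widetilde g_t(x,y)=g(x,y)-t\sum_{i=1}^k\log(-h_i(x,y))$ (defined when all $h_i(x,y)<0$), $y_t^*(x)=\arg\min_y\widetilde g_t(x,y)$ and $\widetilde\phi_t(x)=f(x,y_t^*(x))$. The cosine of the angle between vectors $u,v$ is $\langle u,v\rangle/(\|u\|\|v\|)$. Assumptions: (A1) $f$ is once and $g,h_i$ are twice continuously differentiable; (A2) $\mathcal{X}$ is convex and compact and for every $x\in\mathcal{X}$ there is $y$ with $h_i(x,y)<0$ for all $i$; (LIN) for every $x\in\mathcal{X}$, $g(x,\cdot)$ and all $h_i(x,\cdot)$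 are linear (affine) in $y$ and $\mathcal{Y}(x)$ is compact. *)

theory Defs
  imports "HOL-Analysis.Analysis"
begin

definition C1_fun :: "('z::euclidean_space \<Rightarrow> real) \<Rightarrow> bool" where
  "C1_fun F \<longleftrightarrow> (\<exists>D :: 'z \<Rightarrow> ('z \<Rightarrow>\<^sub>L real).
      (\<forall>z. (F has_derivative blinfun_apply (D z)) (at z)) \<and> continuous_on UNIV D)"

definition C2_fun :: "('z::euclidean_space \<Rightarrow> real) \<Rightarrow> bool" where
  "C2_fun F \<longleftrightarrow> (\<exists>(D :: 'z \<Rightarrow> ('z \<Rightarrow>\<^sub>L real)) (D2 :: 'z \<Rightarrow> ('z \<Rightarrow>\<^sub>L ('z \<Rightarrow>\<^sub>L real))).
      (\<forall>z. (F has_derivative blinfun_apply (D z)) (at z)) \<and>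
      (\<forall>z. (D has_derivative blinfun_apply (D2 z)) (at z)) \<and> continuous_on UNIV D2)"

definition uncurry2 :: "('a \<Rightarrow> 'b \<Rightarrow> real) \<Rightarrow> 'a \<times> 'b \<Rightarrow> real" where
  "uncurry2 F z = F (fst z) (snd z)"

text \<open>Affine (linear in the sense of the paper) real function.\<close>
definition affine_fun :: "('b::real_inner \<Rightarrow> real) \<Rightarrow> bool" where
  "affine_fun \<psi> \<longleftrightarrow> (\<exists>c d. \<forall>y. \<psi> y = inner c y + d)"

definition Yset :: "nat \<Rightarrow> (nat \<Rightarrow> 'a \<Rightarrow> 'b \<Rightarrow> real) \<Rightarrow> 'a \<Rightarrow> 'b set" where
  "Yset k h x = {y. \<forall>i<k. h i x y \<le> 0}"

definition ystar :: "('a \<Rightarrow> 'b \<Rightarrow> real) \<Rightarrow> nat \<Rightarrow> (nat \<Rightarrow> 'a \<Rightarrow> 'b \<Rightarrow> real) \<Rightarrow> 'a \<Rightarrow> 'b set" where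
  "ystar g k h x = {y \<in> Yset k h x. \<forall>y'\<in>Yset k h x. g x y \<le> g x y'}"

definition phi :: "('a \<Rightarrow> 'b \<Rightarrow> real) \<Rightarrow> ('a \<Rightarrow> 'b \<Rightarrow> real) \<Rightarrow> nat \<Rightarrow> (nat \<Rightarrow> 'a \<Rightarrow> 'b \<Rightarrow> real) \<Rightarrow> 'a \<Rightarrow> real" where
  "phi f g k h x = (INF y\<in>ystar g k h x. f x y)"

text \<open>Log-barrier function (meaningful on the strict interior) and its minimizer set y_t*(x).\<close>
definition gbar :: "('a \<Rightarrow> 'b \<Rightarrow> real) \<Rightarrow> nat \<Rightarrow> (nat \<Rightarrow> 'a \<Rightarrow> 'b \<Rightarrow> real) \<Rightarrow> real \<Rightarrow> 'a \<Rightarrow> 'b \<Rightarrow> real" where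
  "gbar g k h t x y = g x y - t * (\<Sum>i<k. ln (- h i x y))"

definition strict_dom :: "nat \<Rightarrow> (nat \<Rightarrow> 'a \<Rightarrow> 'b \<Rightarrow> real) \<Rightarrow> 'a \<Rightarrow> 'b set" where
  "strict_dom k h x = {y. \<forall>i<k. h i x y < 0}"

definition ystar_t :: "('a \<Rightarrow> 'b \<Rightarrow> real) \<Rightarrow> nat \<Rightarrow> (nat \<Rightarrow> 'a \<Rightarrow> 'b \<Rightarrow> real) \<Rightarrow> real \<Rightarrow> 'a \<Rightarrow> 'b set" where
  "ystar_t g k h t x = {y \<in> strict_dom k h x. \<forall>y'\<in>strict_dom k h x. gbar g k h t x y \<le> gbar g k h t x y'}"

definition grad_y :: "('a \<Rightarrow> 'b::real_inner \<Rightarrow> real) \<Rightarrow> 'a \<Rightarrow> 'b \<Rightarrow> 'b" where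
  "grad_y g x y = (THE D. GDERIV (g x) y :> D)"

definition cos_angle :: "'b::real_inner \<Rightarrow> 'b \<Rightarrow> real" where
  "cos_angle u v = inner u v / (norm u * norm v)"

text \<open>tau(x) for the unique lower-level solution ys.\<close>
definition tau :: "('a \<Rightarrow> 'b::real_inner \<Rightarrow> real) \<Rightarrow> nat \<Rightarrow> (nat \<Rightarrow> 'a \<Rightarrow> 'b \<Rightarrow> real) \<Rightarrow> 'a \<Rightarrow> 'b \<Rightarrow> real" where
  "tau g k h x ys = (INF y\<in>Yset k h x - {ys}. cos_angle (grad_y g x ys) (y - ys))"

end

theory Submission
  imports Defs
begin

lemma affine_step:
  assumes "affine_fun \<psi>"
  shows "\<psi> (y + s *\<^sub>R d) = \<psi> y + s * (\<psi> (y + d) - \<psi> y)"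
  using assms unfolding affine_fun_def
  by (auto simp: inner_add_right inner_scaleR_right algebra_simps)

lemma small_step:
  fixes \<psi> :: "nat \<Rightarrow> 'b::real_inner \<Rightarrow> real"
  assumes aff: "\<forall>i<k. affine_fun (\<psi> i)"
    and cond: "\<forall>i<k. \<psi> i y < 0 \<or> (\<psi> i y \<le> 0 \<and> \<psi> i (y+d) \<le> \<psi> i y)"
  shows "\<exists>e>0. \<forall>i<k. \<psi> i (y + e *\<^sub>R d) \<le> 0 \<and> (\<psi> i y < 0 \<longrightarrow> \<psi> i (y + e *\<^sub>R d) < 0)"
proof -
  have ev: "\<forall>i\<in>{..<k}. eventually (\<lambda>e. \<psi> i (y + e *\<^sub>R d) \<le> 0 \<and> (\<psi> i y < 0 \<longrightarrow> \<psi> i (y + e *\<^sub>R d) < 0)) (at_right (0::real))"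
  proof
    fix i assume i: "i \<in> {..<k}"
    have eq: "\<And>e. \<psi> i (y + e *\<^sub>R d) = \<psi> i y + e * (\<psi> i (y + d) - \<psi> i y)"
      using affine_step[of "\<psi> i"] aff i by auto
    show "eventually (\<lambda>e. \<psi> i (y + e *\<^sub>R d) \<le> 0 \<and> (\<psi> i y < 0 \<longrightarrow> \<psi> i (y + e *\<^sub>R d) < 0)) (at_right (0::real))"
    proof (cases "\<psi> i y < 0")
      case True
      have "((\<lambda>e. \<psi> i y + e * (\<psi> i (y + d) - \<psi> i y)) \<longlongrightarrow> \<psi> i y + 0 * (\<psi> i (y + d) - \<psi> i y)) (at_right (0::real))"
        by (intro tendsto_intros)
      hence "eventually (\<lambda>e. \<psi> i y + e * (\<psi> i (y + d) - \<psi> i y) < 0) (at_right (0::real))"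
        using True by (intro order_tendstoD) auto
      then show ?thesis by eventually_elim (use eq True in auto)
    next
      case False
      with cond i have c: "\<psi> i y \<le> 0" "\<psi> i (y+d) \<le> \<psi> i y" by auto
      have "eventually (\<lambda>e::real. e > 0) (at_right 0)" by (simp add: eventually_at_right_less)
      then show ?thesis
      proof eventually_elim
        case (elim e)
        have "e * (\<psi> i (y + d) - \<psi> i y) \<le> 0" using elim c by (simp add: mult_nonneg_nonpos)
        then show ?case using eq c False by auto
      qed
    qed
  qed
  have "eventually (\<lambda>e. \<forall>i\<in>{..<k}. \<psi> i (y + e *\<^sub>R d) \<le> 0 \<and> (\<psi> i y < 0 \<longrightarrow> \<psi> i (y + e *\<^sub>R d) < 0)) (at_right (0::real))"
    by (rule eventually_ball_finite) (use ev in auto)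
  then obtain b where b: "b > 0" "\<forall>e>0. e < b \<longrightarrow> (\<forall>i\<in>{..<k}. \<psi> i (y + e *\<^sub>R d) \<le> 0 \<and> (\<psi> i y < 0 \<longrightarrow> \<psi> i (y + e *\<^sub>R d) < 0))"
    unfolding eventually_at_right_field by auto
  show ?thesis using b by (intro exI[of _ "b/2"]) auto
qed

lemma grad_affine:
  fixes c :: "'b::euclidean_space"
  assumes "\<forall>y. g x y = inner c y + d0"
  shows "grad_y g x y = c"
proof -
  have gx: "g x = (\<lambda>y. inner c y + d0)" using assms by auto
  have D: "GDERIV (g x) y :> c"
    unfolding gx gderiv_def
    by (auto intro!: derivative_eq_intros simp: inner_commute)
  show ?thesis unfolding grad_y_def
  proof (rule the_equality)
    show "GDERIV (g x) y :> c" by (rule D)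
  next
    fix D' assume "GDERIV (g x) y :> D'"
    hence "(\<lambda>h. inner h D') = (\<lambda>h. inner h c)"
      using D unfolding gderiv_def by (rule has_derivative_unique)
    hence "inner (D' - c) D' = inner (D' - c) c" by meson
    hence "inner (D' - c) (D' - c) = 0" by (simp add: inner_diff_right)
    thus "D' = c" by simp
  qed
qed


lemma affine_cont:
  assumes "affine_fun \<psi>"
  shows "continuous_on S (\<lambda>d. \<psi> (y + d))"
proof -
  obtain a b where "\<forall>z. \<psi> z = inner a z + b" using assms unfolding affine_fun_def by auto
  hence eq: "(\<lambda>d. \<psi> (y + d)) = (\<lambda>d. inner a (y + d) + b)" by auto
  show ?thesis unfolding eq by (intro continuous_intros)
qed

lemma ln_diff_bound:
  fixes p q s :: real
  assumes "q > 0" "0 < s" "s < 1" "p \<ge> (1 - s) * q"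
  shows "ln p - ln q \<ge> - s / (1 - s)"
proof -
  have p: "p > 0" using assms by (smt (verit) mult_pos_pos)
  have "ln (q / p) \<le> q / p - 1" using p assms by (intro ln_le_minus_one) auto
  moreover have "ln (q / p) = ln q - ln p" using p assms by (simp add: ln_div)
  moreover have "q / p \<le> 1 / (1 - s)" using assms p by (simp add: field_simps)
  moreover have "1 / (1 - s) - 1 = s / (1 - s)" using assms by (simp add: field_simps)
  ultimately show ?thesis by linarith
qed

theorem theorem2:
  fixes f g :: "real^'n \<Rightarrow> real^'m \<Rightarrow> real"
    and h :: "nat \<Rightarrow> real^'n \<Rightarrow> real^'m \<Rightarrow> real"
    and k :: nat and X :: "(real^'n) set"
    and Lf :: real and x :: "real^'n" and ys :: "real^'m"
  assumes A1_f: "C1_fun (uncurry2 f)"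
    and A1_g: "C2_fun (uncurry2 g)"
    and A1_h: "\<forall>i<k. C2_fun (uncurry2 (h i))"
    and A2_X: "convex X" "compact X"
    and A2_slater: "\<forall>x\<in>X. \<exists>y. \<forall>i<k. h i x y < 0"
    and LIN: "\<forall>x\<in>X. affine_fun (g x) \<and> (\<forall>i<k. affine_fun (h i x)) \<and> compact (Yset k h x)"
    and Lip: "lipschitz_on Lf UNIV (uncurry2 f)"
    and hx: "x \<in> X"
    and single: "ystar g k h x = {ys}"
  shows "tau g k h x ys > 0 \<and>
    (\<forall>t>0. \<forall>yt\<in>ystar_t g k h t x.
       \<bar>f x yt - phi f g k h x\<bar> \<le> Lf * (real k * t) / (tau g k h x ys * norm (grad_y g x ys)))"
proof -
  define Y where "Y = Yset k h x"
  have affg: "affine_fun (g x)" and affh: "\<forall>i<k. affine_fun (h i x)"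
    using LIN hx by auto
  obtain c d0 where gc: "\<forall>y. g x y = inner c y + d0" using affg unfolding affine_fun_def by auto
  have grad: "grad_y g x ys = c" using grad_affine[of g x c d0 ys] gc by blast
  have ysY: "ys \<in> Y" and ysmin: "\<forall>y\<in>Y. g x ys \<le> g x y"
    using single unfolding ystar_def Y_def by auto
  have uniq: "g x ys < g x y" if "y \<in> Y" "y \<noteq> ys" for y
  proof (rule ccontr)
    assume "\<not> g x ys < g x y"
    hence "y \<in> ystar g k h x" using that ysmin unfolding ystar_def Y_def by force
    thus False using single that by auto
  qed
  have gdiff: "g x y - g x z = inner c (y - z)" for y z using gc by (simp add: inner_diff_right)
  have hY: "h i x y \<le> 0" if "y \<in> Y" "i < k" for y i using that unfolding Y_def Yset_def by auto
  obtain y0 where y0: "\<forall>i<k. h i x y0 < 0" using A2_slater hx by auto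
  define e :: "real^'m" where "e = axis undefined 1"
  have e0: "e \<noteq> 0" unfolding e_def by (simp add: axis_eq_0_iff)
  obtain eps where eps: "eps > 0" "\<forall>i<k. h i x (y0 + eps *\<^sub>R e) \<le> 0"
    using small_step[of k "\<lambda>i. h i x" y0 e] affh y0 by blast
  have y0Y: "y0 \<in> Y" using y0 unfolding Y_def Yset_def by (auto simp: less_imp_le)
  have y1Y: "y0 + eps *\<^sub>R e \<in> Y" using eps unfolding Y_def Yset_def by auto
  have "y0 + eps *\<^sub>R e \<noteq> y0" using eps e0 by auto
  then obtain y2 where y2: "y2 \<in> Y" "y2 \<noteq> ys" using y0Y y1Y by metis
  have c0: "c \<noteq> 0"
  proof
    assume "c = 0"
    hence "g x y2 = g x ys" using gc by simp
    thus False using uniq[OF y2] by simp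
  qed
  define K where "K = {d::real^'m. norm d = 1 \<and> (\<forall>i<k. h i x ys = 0 \<longrightarrow> h i x (ys + d) \<le> 0)}"
  have Keq: "K = sphere 0 1 \<inter> (\<Inter>i\<in>{i. i < k \<and> h i x ys = 0}. {d. h i x (ys + d) \<le> 0})"
    unfolding K_def by auto
  have "closed K" unfolding Keq
    by (intro closed_Int closed_sphere closed_INT ballI closed_Collect_le continuous_on_const)
       (use affine_cont affh in auto)
  moreover have "bounded K" unfolding Keq by (meson bounded_Int bounded_sphere)
  ultimately have compK: "compact K" by (simp add: compact_eq_bounded_closed)
  have dirK: "(1 / norm (y - ys)) *\<^sub>R (y - ys) \<in> K" if "y \<in> Y" "y \<noteq> ys" for y
  proof -
    have "h i x (ys + (1 / norm (y - ys)) *\<^sub>R (y - ys)) \<le> 0" if "i < k" "h i x ys = 0" for i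
    proof -
      have "h i x (ys + (1 / norm (y - ys)) *\<^sub>R (y - ys)) = h i x ys + (1 / norm (y - ys)) * (h i x (ys + (y - ys)) - h i x ys)"
        using affine_step[of "h i x"] affh that by blast
      also have "\<dots> = (1 / norm (y - ys)) * h i x y" using that by simp
      also have "\<dots> \<le> 0" using hY[OF \<open>y \<in> Y\<close> \<open>i < k\<close>] by (simp add: divide_nonpos_nonneg)
      finally show ?thesis .
    qed
    thus ?thesis unfolding K_def using that by auto
  qed
  have cpos: "inner c d > 0" if "d \<in> K" for d
  proof -
    have cond: "\<forall>i<k. h i x ys < 0 \<or> (h i x ys \<le> 0 \<and> h i x (ys + d) \<le> h i x ys)"
    proof (intro allI impI)
      fix i assume i: "i < k"
      have "h i x ys \<le> 0" using hY[OF ysY i] .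
      moreover have "h i x ys = 0 \<longrightarrow> h i x (ys + d) \<le> 0" using that i unfolding K_def by auto
      ultimately show "h i x ys < 0 \<or> (h i x ys \<le> 0 \<and> h i x (ys + d) \<le> h i x ys)" by fastforce
    qed
    obtain ep where ep: "ep > 0" "\<forall>i<k. h i x (ys + ep *\<^sub>R d) \<le> 0"
      using small_step[OF affh cond] by blast
    have inY: "ys + ep *\<^sub>R d \<in> Y" using ep unfolding Y_def Yset_def by auto
    have "d \<noteq> 0" using that unfolding K_def by auto
    hence "ys + ep *\<^sub>R d \<noteq> ys" using ep by auto
    from uniq[OF inY this] have "0 < inner c (ep *\<^sub>R d)" using gdiff[of "ys + ep *\<^sub>R d" ys] by simp
    thus ?thesis using ep by (simp add: zero_less_mult_iff)
  qed
  have Kne: "K \<noteq> {}" using dirK[OF y2] by auto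
  obtain dm where dm: "dm \<in> K" "\<forall>d\<in>K. inner c dm \<le> inner c d"
  proof -
    have "continuous_on K (\<lambda>d. inner c d)" by (intro continuous_intros)
    from continuous_attains_inf[OF compK Kne this] show ?thesis using that by blast
  qed
  define m where "m = inner c dm"
  have m0: "m > 0" unfolding m_def using cpos dm by auto
  have nc: "norm c > 0" using c0 by simp
  have cosb: "cos_angle c (y - ys) \<ge> m / norm c" if "y \<in> Y" "y \<noteq> ys" for y
  proof -
    have ny: "norm (y - ys) > 0" using that by simp
    have "m \<le> inner c ((1 / norm (y - ys)) *\<^sub>R (y - ys))" using dm dirK[OF that] unfolding m_def by auto
    also have "\<dots> = inner c (y - ys) / norm (y - ys)" by simp
    finally have "m \<le> inner c (y - ys) / norm (y - ys)" .
    hence "m / norm c \<le> inner c (y - ys) / norm (y - ys) / norm c" using nc by (intro divide_right_mono) auto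
    also have "inner c (y - ys) / norm (y - ys) / norm c = cos_angle c (y - ys)"
      unfolding cos_angle_def by (simp add: divide_divide_eq_left mult.commute)
    finally show ?thesis .
  qed
  have Yne: "Y - {ys} \<noteq> {}" using y2 by auto
  have taudef: "tau g k h x ys = (INF y\<in>Y - {ys}. cos_angle c (y - ys))"
    unfolding tau_def grad Y_def ..
  have tau_ge: "tau g k h x ys \<ge> m / norm c"
    unfolding taudef by (rule cINF_greatest[OF Yne]) (use cosb in auto)
  have taupos: "tau g k h x ys > 0" using tau_ge m0 nc by (smt (verit) divide_pos_pos)
  have tau_le: "tau g k h x ys \<le> cos_angle c (y - ys)" if "y \<in> Y" "y \<noteq> ys" for y
    unfolding taudef
  proof (rule cINF_lower)
    show "bdd_below ((\<lambda>y. cos_angle c (y - ys)) ` (Y - {ys}))"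
      using cosb by (intro bdd_belowI2[of _ "m / norm c"]) auto
  qed (use that in auto)
  have phi_eq: "phi f g k h x = f x ys" unfolding phi_def single by simp
  have Lf0: "Lf \<ge> 0" using Lip by (rule lipschitz_on_nonneg)
  have main: "\<bar>f x yt - phi f g k h x\<bar> \<le> Lf * (real k * t) / (tau g k h x ys * norm (grad_y g x ys))"
    if t: "t > 0" and yt: "yt \<in> ystar_t g k h t x" for t yt
  proof -
    have ytS: "\<forall>i<k. h i x yt < 0" and ytmin: "\<forall>y'\<in>strict_dom k h x. gbar g k h t x yt \<le> gbar g k h t x y'"
      using yt unfolding ystar_t_def strict_dom_def by auto
    have ytY: "yt \<in> Y" using ytS unfolding Y_def Yset_def by (auto simp: less_imp_le)
    define V where "V = g x yt - g x ys"
    have Vs: "V * (1 - s) \<le> real k * t" if s: "0 < s" "s < 1" for s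
    proof -
      define z where "z = yt + s *\<^sub>R (ys - yt)"
      have hz: "h i x z = h i x yt + s * (h i x ys - h i x yt)" if "i < k" for i
        using affine_step[of "h i x" yt s "ys - yt"] affh that unfolding z_def by simp
      have hz2: "- h i x z \<ge> (1 - s) * (- h i x yt)" if "i < k" for i
        using hz[OF that] hY[OF ysY that] s by (simp add: algebra_simps mult_nonneg_nonpos)
      have zS: "z \<in> strict_dom k h x" unfolding strict_dom_def
        using hz2 ytS s by (smt (verit, ccfv_SIG) mem_Collect_eq mult_pos_pos)
      have gz: "g x z = g x yt + s * (g x ys - g x yt)"
        using affine_step[of "g x" yt s "ys - yt"] affg unfolding z_def by simp
      have each: "ln (- h i x z) - ln (- h i x yt) \<ge> - s / (1 - s)" if "i < k" for i
        using ln_diff_bound[of "- h i x yt" s "- h i x z"] ytS that s hz2[OF that] by auto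
      have "(\<Sum>i<k. ln (- h i x z) - ln (- h i x yt)) \<ge> (\<Sum>i<k. - s / (1 - s))"
        by (rule sum_mono) (use each in auto)
      hence sumb: "(\<Sum>i<k. ln (- h i x z)) - (\<Sum>i<k. ln (- h i x yt)) \<ge> - real k * s / (1 - s)"
        by (simp add: sum_subtractf)
      have "gbar g k h t x yt \<le> gbar g k h t x z" using ytmin zS by auto
      hence "t * ((\<Sum>i<k. ln (- h i x z)) - (\<Sum>i<k. ln (- h i x yt))) \<le> s * (- V)"
        unfolding gbar_def gz V_def by (simp add: algebra_simps)
      moreover have "t * ((\<Sum>i<k. ln (- h i x z)) - (\<Sum>i<k. ln (- h i x yt))) \<ge> t * (- real k * s / (1 - s))"
        using sumb t by (intro mult_left_mono) auto
      ultimately have "t * (- real k * s / (1 - s)) \<le> s * (- V)" by linarith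
      hence "- (t * real k * s) \<le> s * (- V) * (1 - s)" using s by (simp add: field_simps)
      hence "s * (V * (1 - s)) \<le> s * (real k * t)" by (simp add: algebra_simps)
      thus ?thesis using s by simp
    qed
    have Vle: "V \<le> real k * t"
    proof (rule ccontr)
      assume "\<not> V \<le> real k * t"
      hence Vg: "V > real k * t" by simp
      have kt0: "real k * t \<ge> 0" using t by simp
      define s where "s = (V - real k * t) / (2 * V)"
      have Vp: "V > 0" using Vg kt0 by linarith
      have s0: "0 < s" "s < 1" unfolding s_def using Vg Vp kt0 by (auto simp: field_simps)
      have eq: "V * (1 - s) = (V + real k * t) / 2" unfolding s_def using Vp by (simp add: field_simps)
      have "(V + real k * t) / 2 \<le> real k * t" using Vs[OF s0] unfolding eq .
      hence "V + real k * t \<le> 2 * (real k * t)" by (simp add: field_simps)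
      thus False using Vg by (simp add: mult.commute)
    qed
    have dist_le: "\<bar>f x yt - f x ys\<bar> \<le> Lf * norm (yt - ys)"
    proof -
      have "dist (uncurry2 f (x, yt)) (uncurry2 f (x, ys)) \<le> Lf * dist (x, yt) (x, ys)"
        using Lip by (rule lipschitz_onD) auto
      thus ?thesis by (simp add: uncurry2_def dist_Pair_Pair dist_real_def dist_norm)
    qed
    have nrm: "norm (yt - ys) \<le> real k * t / (tau g k h x ys * norm c)"
    proof (cases "yt = ys")
      case True thus ?thesis using taupos nc t by simp
    next
      case False
      have ny: "norm (yt - ys) > 0" using False by simp
      have "tau g k h x ys \<le> inner c (yt - ys) / (norm c * norm (yt - ys))"
        using tau_le[OF ytY False] unfolding cos_angle_def .
      hence "tau g k h x ys * (norm c * norm (yt - ys)) \<le> inner c (yt - ys)"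
        using ny nc by (simp add: field_simps)
      also have "\<dots> = V" unfolding V_def gdiff ..
      finally have "tau g k h x ys * norm c * norm (yt - ys) \<le> real k * t" using Vle by (simp add: mult.assoc)
      thus ?thesis using taupos nc by (simp add: field_simps)
    qed
    have "\<bar>f x yt - phi f g k h x\<bar> \<le> Lf * norm (yt - ys)" using dist_le phi_eq by simp
    also have "\<dots> \<le> Lf * (real k * t / (tau g k h x ys * norm c))" using nrm Lf0 by (rule mult_left_mono)
    finally show ?thesis unfolding grad by simp
  qed
  show ?thesis using taupos main by auto
qed

end
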